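(* For positive integers $m, r$ with $r$ even and $m \geq 4$, $C_m(r) = 3$.
   Context: For positive integers $m, r$, $C_m(r)$ is the minimum odd positive integer $n$ such that there exist vectors $v_1, \ldots, v_n \in \mathbb{Z}^m$ (not necessarily distinct) with $|v_i| = \sqrt{r}$ for every $i$ and $v_1 + \cdots + v_n = \mathbf{0}$; if no such odd $n$ exists, $C_m(r) = 0$. Here $|\cdot|$ is the Euclidean norm. *)

theory Defs
  imports Main
begin

(* Vectors in Z^m are represented as integer lists of length m.
   |v| = sqrt r  iff  the sum of squares of the coordinates equals r. *)

definition sq_norm :: "int list \<Rightarrow> int" where
  "sq_norm v = (\<Sum>x\<leftarrow>v. x ^ 2)"

definition zero_sum_config :: "nat \<Rightarrow> nat \<Rightarrow> nat \<Rightarrow> bool" where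
  "zero_sum_config m r n \<longleftrightarrow>
     (\<exists>vs :: nat \<Rightarrow> int list.
        (\<forall>i<n. length (vs i) = m \<and> sq_norm (vs i) = int r) \<and>
        (\<forall>j<m. (\<Sum>i<n. vs i ! j) = 0))"

definition C :: "nat \<Rightarrow> nat \<Rightarrow> nat" where
  "C m r = (if \<exists>n. odd n \<and> zero_sum_config m r n
            then (LEAST n. odd n \<and> zero_sum_config m r n) else 0)"

end

theory Submission
  imports Defs "HOL-Number_Theory.Number_Theory"
begin

definition sos4 :: "int \<Rightarrow> bool" where
  "sos4 n \<longleftrightarrow> (\<exists>a b c d. n = a^2+b^2+c^2+d^2)"

lemma euler4:
  fixes a b c d w x y z :: int
  shows "(a^2+b^2+c^2+d^2)*(w^2+x^2+y^2+z^2) = (a*w+b*x+c*y+d*z)^2 + (a*x-b*w+c*z-d*y)^2 + (a*y-b*z-c*w+d*x)^2 + (a*z+b*y-c*x-d*w)^2"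
  unfolding power2_eq_square by (simp add: algebra_simps)

lemma sos4_mult: "sos4 x \<Longrightarrow> sos4 y \<Longrightarrow> sos4 (x*y)"
  unfolding sos4_def by (metis euler4)

lemma centered:
  fixes x m :: int assumes "m > 0"
  obtains y where "[y = x] (mod m)" "4*y^2 \<le> m^2"
proof -
  define y where "y = (x + m div 2) mod m - m div 2"
  have "[y = x] (mod m)" unfolding y_def cong_def by (simp add: mod_diff_left_eq)
  moreover have "- (m div 2) \<le> y" "y < m - m div 2" using assms unfolding y_def by auto
  hence "\<bar>2*y\<bar> \<le> m" by linarith
  hence "\<bar>2*y\<bar>^2 \<le> m^2" by (intro power_mono) auto
  hence "(2*y)^2 \<le> m^2" by simp
  hence "4*y^2 \<le> m^2" by (simp add: power_mult_distrib)
  ultimately show ?thesis using that by blast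
qed

lemma prime_no_mid: "prime (p::int) \<Longrightarrow> m dvd p \<Longrightarrow> 1 < m \<Longrightarrow> m < p \<Longrightarrow> False"
proof -
  assume p: "prime p" and d: "m dvd p" and m1: "1 < m" and mp: "m < p"
  from prime_int_iff[THEN iffD1, OF p] have "\<forall>k. 0 \<le> k \<and> k dvd p \<longrightarrow> k = 1 \<or> k = p" by blast
  moreover have "0 \<le> m" using m1 by simp
  ultimately have "m = 1 \<or> m = p" using d by blast
  thus False using m1 mp by auto
qed

lemma descent_step:
  fixes m p :: int
  assumes p: "prime p" and m1: "1 < m" and mp: "m < p" and s: "sos4 (m*p)"
  shows "\<exists>r. 0 < r \<and> r < m \<and> sos4 (r*p)"
proof -
  obtain a b c d where abcd: "m*p = a^2+b^2+c^2+d^2" using s sos4_def by blast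
  have m0: "m > 0" using m1 by simp
  obtain w where w: "[w = a] (mod m)" "4*w^2 \<le> m^2" using centered[OF m0] by blast
  obtain x where x: "[x = b] (mod m)" "4*x^2 \<le> m^2" using centered[OF m0] by blast
  obtain y where y: "[y = c] (mod m)" "4*y^2 \<le> m^2" using centered[OF m0] by blast
  obtain z where z: "[z = d] (mod m)" "4*z^2 \<le> m^2" using centered[OF m0] by blast
  have "[w^2+x^2+y^2+z^2 = a^2+b^2+c^2+d^2] (mod m)"
    using w x y z by (intro cong_add cong_pow) auto
  also have "[a^2+b^2+c^2+d^2 = 0] (mod m)" unfolding abcd[symmetric] cong_def by simp
  finally have "m dvd w^2+x^2+y^2+z^2" by (simp add: cong_0_iff)
  then obtain r where r: "w^2+x^2+y^2+z^2 = m*r" by (auto simp: dvd_def)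
  have "4*(m*r) \<le> 4*m^2" using w x y z r by linarith
  hence rm: "r \<le> m" using m0 by (simp add: power2_eq_square)
  have "m*r \<ge> 0" unfolding r[symmetric] by simp
  hence r0: "r \<ge> 0" using m0 by (simp add: zero_le_mult_iff)
  have notr0: "r \<noteq> 0"
  proof
    assume "r = 0"
    hence s0: "w^2+x^2+y^2+z^2 = 0" using r by simp
    have "w^2 = 0" "x^2 = 0" "y^2 = 0" "z^2 = 0"
      using s0 zero_le_power2[of w] zero_le_power2[of x] zero_le_power2[of y] zero_le_power2[of z] by linarith+
    hence "w = 0" "x = 0" "y = 0" "z = 0" by simp_all
    hence "m dvd a" "m dvd b" "m dvd c" "m dvd d" using w x y z
      by (auto simp: cong_def dvd_eq_mod_eq_0)
    hence "m^2 dvd a^2+b^2+c^2+d^2" by (intro dvd_add) auto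
    hence "m*m dvd m*p" using abcd by (simp add: power2_eq_square)
    hence "m dvd p" using m0 by simp
    thus False using p m1 mp prime_no_mid by blast
  qed
  have notrm: "r \<noteq> m"
  proof
    assume "r = m"
    hence "w^2+x^2+y^2+z^2 = m^2" using r by (simp add: power2_eq_square)
    hence all: "4*w^2 = m^2" "4*x^2 = m^2" "4*y^2 = m^2" "4*z^2 = m^2" using w x y z by linarith+
    have key: "m^2 dvd v^2 - u^2" if uv: "[u = v] (mod m)" and u4: "4*u^2 = m^2" for u v :: int
    proof -
      obtain k where k: "v = u + m*k" using uv unfolding cong_iff_lin by blast
      have "(2*u)^2 = m^2" using u4 by (simp add: power_mult_distrib)
      hence "2*u = m \<or> 2*u = -m" using power2_eq_iff by blast
      hence "v^2 - u^2 = m^2*(k+k^2) \<or> v^2 - u^2 = m^2*(k^2-k)"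
        unfolding k by (auto simp: algebra_simps power2_eq_square)
      thus ?thesis by auto
    qed
    have "m^2 dvd (a^2-w^2)+(b^2-x^2)+(c^2-y^2)+(d^2-z^2)"
      using key[OF w(1) all(1)] key[OF x(1) all(2)] key[OF y(1) all(3)] key[OF z(1) all(4)]
      by (intro dvd_add) auto
    hence "m^2 dvd (a^2+b^2+c^2+d^2) - (w^2+x^2+y^2+z^2)" by (simp add: algebra_simps)
    hence "m^2 dvd m*p - m^2" using abcd \<open>w^2+x^2+y^2+z^2 = m^2\<close> by simp
    hence "m^2 dvd (m*p - m^2) + m^2" by (intro dvd_add) auto
    hence "m^2 dvd m*p" by simp
    hence "m*m dvd m*p" by (simp add: power2_eq_square)
    hence "m dvd p" using m0 by simp
    thus False using p m1 mp prime_no_mid by blast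
  qed
  define A where "A = a*w+b*x+c*y+d*z"
  define B where "B = a*x-b*w+c*z-d*y"
  define Cc where "Cc = a*y-b*z-c*w+d*x"
  define D where "D = a*z+b*y-c*x-d*w"
  have eq: "(m*p)*(m*r) = A^2+B^2+Cc^2+D^2" unfolding A_def B_def Cc_def D_def abcd r[symmetric]
    by (rule euler4)
  have "[A = a*a+b*b+c*c+d*d] (mod m)" unfolding A_def using w x y z
    by (intro cong_add cong_mult) (auto simp: cong_sym)
  hence "[A = m*p] (mod m)" using abcd by (simp add: power2_eq_square)
  hence dA: "m dvd A" by (simp add: cong_def mod_eq_0_iff_dvd [symmetric])
  have "[B = a*b-b*a+c*d-d*c] (mod m)" unfolding B_def using w x y z
    by (intro cong_add cong_mult cong_diff) (auto simp: cong_sym)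
  hence dB: "m dvd B" by (simp add: cong_0_iff)
  have "[Cc = a*c-b*d-c*a+d*b] (mod m)" unfolding Cc_def using w x y z
    by (intro cong_add cong_mult cong_diff) (auto simp: cong_sym)
  hence dC: "m dvd Cc" by (simp add: cong_0_iff)
  have "[D = a*d+b*c-c*b-d*a] (mod m)" unfolding D_def using w x y z
    by (intro cong_add cong_mult cong_diff) (auto simp: cong_sym)
  hence dD: "m dvd D" by (simp add: cong_0_iff)
  obtain A' B' C' D' where "A = m*A'" "B = m*B'" "Cc = m*C'" "D = m*D'"
    using dA dB dC dD by (auto simp: dvd_def)
  hence "m^2*(r*p) = m^2*(A'^2+B'^2+C'^2+D'^2)" using eq
    by (simp add: power_mult_distrib algebra_simps power2_eq_square)
  hence "r*p = A'^2+B'^2+C'^2+D'^2" using m0 by simp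
  hence "sos4 (r*p)" unfolding sos4_def by blast
  moreover have "0 < r \<and> r < m" using r0 notr0 notrm rm by auto
  ultimately show ?thesis by blast
qed


lemma descent:
  fixes p :: int
  assumes p: "prime p"
  shows "0 < m \<Longrightarrow> m < p \<Longrightarrow> sos4 (m*p) \<Longrightarrow> sos4 p"
proof (induction "nat m" arbitrary: m rule: less_induct)
  case less
  show ?case
  proof (cases "m = 1")
    case True thus ?thesis using less.prems by simp
  next
    case False
    hence "1 < m" using less.prems by simp
    then obtain r where r: "0 < r" "r < m" "sos4 (r*p)" using descent_step[OF p _ less.prems(2,3)] by blast
    have "nat r < nat m" using r by simp
    thus ?thesis using less.hyps[of r] r less.prems by simp
  qed
qed

lemma small_inj:
  fixes p x x' :: int
  assumes p: "prime p" and x: "0 \<le> x" "2*x < p" and x': "0 \<le> x'" "2*x' < p"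
    and d: "p dvd x^2 - x'^2"
  shows "x = x'"
proof -
  have "x^2 - x'^2 = (x - x')*(x + x')" by (simp add: algebra_simps power2_eq_square)
  hence "p dvd (x - x') \<or> p dvd (x + x')" using d p by (simp add: prime_dvd_mult_iff)
  thus ?thesis
  proof
    assume h: "p dvd x - x'"
    show ?thesis
    proof (rule ccontr)
      assume "x \<noteq> x'"
      hence "\<bar>p\<bar> \<le> \<bar>x - x'\<bar>" using dvd_imp_le_int[OF _ h] by simp
      thus False using x x' by linarith
    qed
  next
    assume h: "p dvd x + x'"
    show ?thesis
    proof (rule ccontr)
      assume "x \<noteq> x'"
      hence "x + x' \<noteq> 0" using x x' by linarith
      hence "\<bar>p\<bar> \<le> \<bar>x + x'\<bar>" using dvd_imp_le_int[OF _ h] by simp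
      thus False using x x' by linarith
    qed
  qed
qed

lemma exists_xy:
  fixes p :: int
  assumes p: "prime p" and p2: "p \<noteq> 2"
  shows "\<exists>x y. 0 \<le> x \<and> 2*x < p \<and> 0 \<le> y \<and> 2*y < p \<and> p dvd x^2 + y^2 + 1"
proof -
  have pg: "p > 2" using prime_ge_2_int[OF p] p2 by linarith
  have "odd p" using prime_odd_int[OF p pg] .
  define h where "h = (p - 1) div 2"
  have h2: "2*h = p - 1" using \<open>odd p\<close> unfolding h_def by presburger
  define S where "S = {0..h}"
  define f where "f x = x^2 mod p" for x
  define g where "g y = (-1 - y^2) mod p" for y
  have inS: "0 \<le> x \<and> 2*x < p" if "x \<in> S" for x using that h2 unfolding S_def by auto
  have injf: "inj_on f S"
  proof (rule inj_onI)
    fix x x' assume a: "x \<in> S" "x' \<in> S" "f x = f x'"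
    hence "p dvd x^2 - x'^2" unfolding f_def by (simp add: mod_eq_dvd_iff)
    moreover have "0 \<le> x \<and> 2*x < p" "0 \<le> x' \<and> 2*x' < p" using inS a by auto
    ultimately show "x = x'" using small_inj[OF p] by blast
  qed
  have injg: "inj_on g S"
  proof (rule inj_onI)
    fix x x' assume a: "x \<in> S" "x' \<in> S" "g x = g x'"
    hence "p dvd (-1 - x^2) - (-1 - x'^2)" unfolding g_def by (simp add: mod_eq_dvd_iff)
    hence "p dvd - (x^2 - x'^2)" by (simp add: algebra_simps)
    hence "p dvd x^2 - x'^2" by (simp only: dvd_minus_iff)
    moreover have "0 \<le> x \<and> 2*x < p" "0 \<le> x' \<and> 2*x' < p" using inS a by auto
    ultimately show "x = x'" using small_inj[OF p] by blast
  qed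
  have cS: "card S = nat (h + 1)" unfolding S_def by simp
  have sub: "f ` S \<union> g ` S \<subseteq> {0..<p}" unfolding f_def g_def using pg by auto
  show ?thesis
  proof (rule ccontr)
    assume nex: "\<not> ?thesis"
    have "f ` S \<inter> g ` S = {}"
    proof (rule ccontr)
      assume "f ` S \<inter> g ` S \<noteq> {}"
      then obtain x y where xy: "x \<in> S" "y \<in> S" "f x = g y" by auto
      hence "p dvd x^2 - (-1 - y^2)" unfolding f_def g_def by (simp add: mod_eq_dvd_iff)
      hence "p dvd x^2 + y^2 + 1" by (simp add: algebra_simps)
      thus False using nex inS xy by blast
    qed
    hence "card (f ` S \<union> g ` S) = card (f ` S) + card (g ` S)"
      by (intro card_Un_disjoint) (auto simp: S_def)
    also have "\<dots> = 2 * nat (h+1)" using card_image[OF injf] card_image[OF injg] cS by simp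
    finally have "card (f ` S \<union> g ` S) = 2 * nat (h+1)" .
    moreover have "card (f ` S \<union> g ` S) \<le> card {0..<p}" by (intro card_mono sub) simp
    ultimately have "2 * nat (h+1) \<le> nat p" by simp
    thus False using h2 pg by linarith
  qed
qed

lemma sos4_prime:
  fixes p :: int
  assumes p: "prime p"
  shows "sos4 p"
proof (cases "p = 2")
  case True
  have "p = 1^2 + 1^2 + 0^2 + 0^2" using True by simp
  thus ?thesis unfolding sos4_def by blast
next
  case False
  have pg: "p > 2" using prime_ge_2_int[OF p] False by linarith
  obtain x y where xy: "0 \<le> x" "2*x < p" "0 \<le> y" "2*y < p" "p dvd x^2 + y^2 + 1"
    using exists_xy[OF p False] by blast
  then obtain m where m: "x^2 + y^2 + 1 = p * m" by (auto simp: dvd_def)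
  have pos: "x^2 + y^2 + 1 > 0" by (simp add: add_nonneg_pos)
  hence m0: "m > 0" using m pg by (simp add: zero_less_mult_iff)
  have "(2*x)^2 \<le> (p - 1)^2" using xy by (intro power_mono) auto
  moreover have "(2*y)^2 \<le> (p - 1)^2" using xy by (intro power_mono) auto
  ultimately have "4*(x^2 + y^2 + 1) \<le> 2*(p-1)^2 + 4" by (simp add: power_mult_distrib)
  also have "\<dots> < 4*p^2"
  proof -
    have pp: "0 < p*p" using pg by simp
    have "2*(p-1)^2 + 4 = 2*(p*p) - 4*p + 6" by (simp add: power2_eq_square algebra_simps)
    moreover have "4*p^2 = 4*(p*p)" by (simp add: power2_eq_square)
    ultimately show ?thesis using pp pg by linarith
  qed
  finally have "p*m < p*p" using m by (simp add: power2_eq_square)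
  hence mp: "m < p" using pg by simp
  have "m*p = x^2 + y^2 + 1^2 + 0^2" using m by (simp add: algebra_simps)
  hence "sos4 (m*p)" unfolding sos4_def by blast
  thus ?thesis using descent[OF p m0 mp] by blast
qed

lemma sos4_nat: "sos4 (int n)"
proof (induction n rule: less_induct)
  case (less n)
  show ?case
  proof (cases "n \<le> 1")
    case True
    hence "int n = (int n)^2 + 0^2 + 0^2 + 0^2" by (cases n) auto
    thus ?thesis unfolding sos4_def by blast
  next
    case False
    then obtain q where q: "prime q" "q dvd n" using prime_factor_nat[of n] by auto
    then obtain k where k: "n = q * k" by (auto simp: dvd_def)
    have "q > 1" using q prime_gt_1_nat by blast
    moreover have "k > 0" using k False by (cases k) auto
    ultimately have "k < n" using k by simp
    hence "sos4 (int k)" using less by blast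
    moreover have "sos4 (int q)" using q sos4_prime by simp
    ultimately show ?thesis using k sos4_mult by simp
  qed
qed


lemma sq_norm_pad: "sq_norm (xs @ replicate k 0) = sq_norm xs"
  unfolding sq_norm_def by (simp add: sum_list_replicate)

lemma no_one: assumes "0 < r" shows "\<not> zero_sum_config m r 1"
proof
  assume "zero_sum_config m r 1"
  then obtain vs where h: "length (vs 0) = m" "sq_norm (vs 0) = int r" "\<forall>j<m. vs 0 ! j = 0"
    unfolding zero_sum_config_def by auto
  have "vs 0 = replicate m 0" using h by (intro nth_equalityI) auto
  hence "sq_norm (vs 0) = 0" unfolding sq_norm_def by (simp add: sum_list_replicate)
  thus False using h assms by simp
qed

lemma three: assumes "even r" and "4 \<le> m" shows "zero_sum_config m r 3"
proof -
  obtain a b c d where abcd: "int (r div 2) = a^2+b^2+c^2+d^2" using sos4_nat sos4_def by blast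
  have r2: "int r = 2*(a^2+b^2+c^2+d^2)" using assms(1) abcd by (metis dvd_mult_div_cancel of_nat_mult of_nat_numeral)
  define z where "z = replicate (m-4) (0::int)"
  define v1 where "v1 = [a-b, a+b, c-d, c+d] @ z"
  define v2 where "v2 = [-a-c, d-b, a-c, -d-b] @ z"
  define v3 where "v3 = [b+c, -a-d, d-a, b-c] @ z"
  define vs where "vs i = (if i = 0 then v1 else if i = 1 then v2 else v3)" for i :: nat
  have len: "length (vs i) = m" for i using assms(2) unfolding vs_def v1_def v2_def v3_def z_def by auto
  have n1: "sq_norm v1 = int r" unfolding v1_def z_def sq_norm_pad r2
    by (simp add: sq_norm_def power2_eq_square algebra_simps)
  have n2: "sq_norm v2 = int r" unfolding v2_def z_def sq_norm_pad r2
    by (simp add: sq_norm_def power2_eq_square algebra_simps)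
  have n3: "sq_norm v3 = int r" unfolding v3_def z_def sq_norm_pad r2
    by (simp add: sq_norm_def power2_eq_square algebra_simps)
  have nrm: "sq_norm (vs i) = int r" for i unfolding vs_def using n1 n2 n3 by auto
  have sm: "(\<Sum>i<3. vs i ! j) = 0" if jm: "j < m" for j
  proof -
    have "(\<Sum>i<3. vs i ! j) = v1 ! j + v2 ! j + v3 ! j"
      by (simp add: numeral_3_eq_3 vs_def)
    also have "\<dots> = 0"
    proof (cases "j < 4")
      case True
      hence "j = 0 \<or> j = 1 \<or> j = 2 \<or> j = 3" by auto
      thus ?thesis unfolding v1_def v2_def v3_def by (auto simp: nth_append)
    next
      case False
      thus ?thesis unfolding v1_def v2_def v3_def z_def using jm by (simp add: nth_append)
    qed
    finally show ?thesis .
  qed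
  show ?thesis unfolding zero_sum_config_def using len nrm sm by blast
qed

theorem lemma4:
  fixes m r :: nat
  assumes "0 < r" and "even r" and "4 \<le> m"
  shows "C m r = 3"
proof -
  have P3: "odd (3::nat) \<and> zero_sum_config m r 3" using three[OF assms(2,3)] by simp
  have "(LEAST n. odd n \<and> zero_sum_config m r n) = 3"
  proof (rule Least_equality)
    show "odd (3::nat) \<and> zero_sum_config m r 3" by (rule P3)
  next
    fix n assume n: "odd n \<and> zero_sum_config m r n"
    show "3 \<le> n"
    proof (rule ccontr)
      assume "\<not> 3 \<le> n"
      moreover have "odd n" using n by blast
      ultimately have "n = 1" by presburger
      thus False using n no_one[OF assms(1)] by simp
    qed
  qed
  moreover have "\<exists>n. odd n \<and> zero_sum_config m r n" using P3 by blast
  ultimately show ?thesis unfolding C_def by simp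
qed

end
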